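(* Let $w\geqslant2$ and $h=2^d$, $d\in\mathbb{N}$. Then $|\mathcal{H}_{h,w}|=w\cdot h$, where $\mathcal{H}_{h,w}$ is the set of fast Hough transform patterns on the $h\times w$ image.
   Context: Image: the set of pixels $p_{ij}$, $i=0,\dots,h-1$ (row, from the bottom), $j=0,\dots,w-1$ (column). A pattern is a nonempty set of pixels. For a pattern $T$ with exactly one pixel in each of its rows, $\Delta(T)=(j_{top}-j_{bot})\bmod w$ (column indices of topmost and bottommost pixels), $\mathit{tran}_{a,b}(T)=\{p_{i+a,\,(j+b)\bmod w}\mid p_{ij}\in T\}$. Define $\mathcal{H}_0=\{\{p_{0j}\}\mid j=0,\dots,w-1\}$, $\mathcal{H}_k=\{T\cup\mathit{tran}_{2^{k-1},\,\Delta(T)+s}(T)\mid T\in\mathcal{H}_{k-1},\ s\in\{0,1\}\}$ for $k=1,\dots,d$, and $\mathcal{H}_{h,w}=\mathcal{H}_d$ (as a set of distinct patterns). *)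

theory Defs
  imports Main
begin

text \<open>A pixel p_ij is the pair (i, j): row i (counted from the bottom), column j.
  A pattern is a set of pixels.\<close>
type_synonym pixel = "nat \<times> nat"
type_synonym pattern = "pixel set"

text \<open>Column index of the topmost / bottommost pixel of a pattern
  (meaningful for patterns with exactly one pixel in each of their rows).\<close>
definition top_col :: "pattern \<Rightarrow> nat" where
  "top_col T = (THE j. (Max (fst ` T), j) \<in> T)"

definition bot_col :: "pattern \<Rightarrow> nat" where
  "bot_col T = (THE j. (Min (fst ` T), j) \<in> T)"

definition Delta :: "nat \<Rightarrow> pattern \<Rightarrow> nat" where
  "Delta w T = nat ((int (top_col T) - int (bot_col T)) mod int w)"

definition tran :: "nat \<Rightarrow> nat \<Rightarrow> nat \<Rightarrow> pattern \<Rightarrow> pattern" where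
  "tran w a b T = (\<lambda>(i, j). (i + a, (j + b) mod w)) ` T"

fun fht :: "nat \<Rightarrow> nat \<Rightarrow> pattern set" where
  "fht w 0 = {{(0, j)} | j. j < w}"
| "fht w (Suc k) =
     {T \<union> tran w (2 ^ k) (Delta w T + s) T | T s. T \<in> fht w k \<and> s \<in> {0, 1}}"

end

theory Submission
  imports Defs
begin

definition graph :: "nat \<Rightarrow> (nat \<Rightarrow> nat) \<Rightarrow> pattern" where
  "graph n f = (\<lambda>i. (i, f i)) ` {..<n}"

lemma mem_graph: "(i, j) \<in> graph n f \<longleftrightarrow> i < n \<and> j = f i"
  unfolding graph_def by auto

lemma graph_cols:
  assumes "0 < n"
  shows "top_col (graph n f) = f (n - 1)" "bot_col (graph n f) = f 0"
proof -
  have fst: "fst ` graph n f = {..<n}" unfolding graph_def by force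
  have mx: "Max {..<n} = n - 1"
    using assms by (intro Max_eqI) auto
  have mn: "Min {..<n} = (0::nat)"
    using assms by (intro Min_eqI) auto
  show "top_col (graph n f) = f (n - 1)"
    unfolding top_col_def fst mx using assms by (auto simp: mem_graph)
  show "bot_col (graph n f) = f 0"
    unfolding bot_col_def fst mn using assms by (auto simp: mem_graph)
qed

lemma graph_step:
  "graph n f \<union> tran w n b (graph n f)
   = graph (2 * n) (\<lambda>i. if i < n then f i else (f (i - n) + b) mod w)"
proof -
  have "tran w n b (graph n f) = (\<lambda>i. (i, (f (i - n) + b) mod w)) ` {n..<2*n}"
  proof -
    have "tran w n b (graph n f) = (\<lambda>i. (i + n, (f i + b) mod w)) ` {..<n}"
      unfolding tran_def graph_def by (auto simp: image_image)
    also have "\<dots> = (\<lambda>i. (i, (f (i - n) + b) mod w)) ` ((\<lambda>i. i + n) ` {..<n})"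
      by (simp add: image_image)
    also have "(\<lambda>i. i + n) ` {..<n} = {n..<2*n}"
    proof
      show "(\<lambda>i. i + n) ` {..<n} \<subseteq> {n..<2*n}" by auto
      show "{n..<2*n} \<subseteq> (\<lambda>i. i + n) ` {..<n}"
      proof
        fix x assume "x \<in> {n..<2*n}"
        then show "x \<in> (\<lambda>i. i + n) ` {..<n}" by (intro image_eqI[of _ _ "x - n"]) auto
      qed
    qed
    finally show ?thesis .
  qed
  then show ?thesis
    unfolding graph_def by (auto simp: image_iff)
qed

lemma graph_step':
  "T = graph n f \<Longrightarrow> T \<union> tran w n b T
   = graph (2 * n) (\<lambda>i. if i < n then f i else (f (i - n) + b) mod w)"
  using graph_step by simp

definition good :: "nat \<Rightarrow> nat \<Rightarrow> pattern \<Rightarrow> bool" where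
  "good w k T \<longleftrightarrow> (\<exists>f. T = graph (2 ^ k) f \<and> (\<forall>i. f i < w))"

lemma fht_good:
  assumes "w \<ge> 2"
  shows "T \<in> fht w k \<Longrightarrow> good w k T"
proof (induction k arbitrary: T)
  case 0
  then obtain j where j: "j < w" "T = {(0, j)}" by auto
  then have "T = graph (2 ^ 0) (\<lambda>_. j)" unfolding graph_def by auto
  then show ?case unfolding good_def using j by blast
next
  case (Suc k)
  then obtain T0 s where T0: "T0 \<in> fht w k" "s \<in> {0,1::nat}"
    and T: "T = T0 \<union> tran w (2 ^ k) (Delta w T0 + s) T0" by auto
  from Suc.IH[OF T0(1)] obtain f where f: "T0 = graph (2 ^ k) f" "\<forall>i. f i < w"
    unfolding good_def by blast
  let ?g = "\<lambda>i. if i < 2 ^ k then f i else (f (i - 2 ^ k) + (Delta w T0 + s)) mod w"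
  have "T = graph (2 ^ Suc k) ?g" using T graph_step'[OF f(1)] by simp
  moreover have "\<forall>i. ?g i < w" using f assms by auto
  ultimately show ?case unfolding good_def by blast
qed

lemma fht_Suc_image:
  "fht w (Suc k) = (\<lambda>(T, s). T \<union> tran w (2 ^ k) (Delta w T + s) T) ` (fht w k \<times> {0, 1})"
  by auto

lemma suc_mod_ne: "(w::nat) \<ge> 2 \<Longrightarrow> (x + 1) mod w \<noteq> x mod w"
  by (simp add: mod_Suc)

lemma inj_step:
  assumes "w \<ge> 2"
  shows "inj_on (\<lambda>(T, s). T \<union> tran w (2 ^ k) (Delta w T + s) T) (fht w k \<times> {0, 1})"
proof (rule inj_onI, clarify)
  fix T1 s1 T2 s2
  assume A: "T1 \<in> fht w k" "s1 \<in> {0, 1::nat}" "T2 \<in> fht w k" "s2 \<in> {0, 1::nat}"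
    and E: "T1 \<union> tran w (2 ^ k) (Delta w T1 + s1) T1 = T2 \<union> tran w (2 ^ k) (Delta w T2 + s2) T2"
  obtain f1 where f1: "T1 = graph (2 ^ k) f1" "\<forall>i. f1 i < w"
    using fht_good[OF assms A(1)] unfolding good_def by blast
  obtain f2 where f2: "T2 = graph (2 ^ k) f2" "\<forall>i. f2 i < w"
    using fht_good[OF assms A(3)] unfolding good_def by blast
  let ?g1 = "\<lambda>i. if i < 2 ^ k then f1 i else (f1 (i - 2 ^ k) + (Delta w T1 + s1)) mod w"
  let ?g2 = "\<lambda>i. if i < 2 ^ k then f2 i else (f2 (i - 2 ^ k) + (Delta w T2 + s2)) mod w"
  have G: "graph (2 * 2 ^ k) ?g1 = graph (2 * 2 ^ k) ?g2"
    using E graph_step'[OF f1(1)] graph_step'[OF f2(1)] by simp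
  have geq: "?g1 i = ?g2 i" if "i < 2 * 2 ^ k" for i
  proof -
    have "(i, ?g1 i) \<in> graph (2 * 2 ^ k) ?g1" using that unfolding mem_graph by simp
    then have "(i, ?g1 i) \<in> graph (2 * 2 ^ k) ?g2" by (simp only: G)
    then show ?thesis unfolding mem_graph by (rule conjunct2)
  qed
  have "\<forall>i < 2 ^ k. f1 i = f2 i"
  proof (intro allI impI)
    fix i :: nat assume "i < 2 ^ k"
    then show "f1 i = f2 i" using geq[of i] by simp
  qed
  then have T12: "T1 = T2" unfolding f1 f2 graph_def by auto
  have "?g1 (2 ^ k) = ?g2 (2 ^ k)" by (rule geq) simp
  then have "(f1 0 + (Delta w T1 + s1)) mod w = (f2 0 + (Delta w T1 + s2)) mod w"
    using T12 by simp
  moreover have "f1 0 = f2 0" using geq[of 0] by simp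
  ultimately have "(f1 0 + Delta w T1 + s1) mod w = (f1 0 + Delta w T1 + s2) mod w"
    by (simp add: add.assoc)
  then have "s1 = s2" using A(2) A(4) assms
    using suc_mod_ne[of w "f1 0 + Delta w T1"] by auto
  then show "T1 = T2 \<and> s1 = s2" using T12 by simp
qed

theorem proposition6:
  fixes w h d :: nat
  assumes "w \<ge> 2" and "h = 2 ^ d"
  shows "card (fht w d) = w * h"
  unfolding assms(2)
proof (induction d)
  case 0
  have "fht w 0 = (\<lambda>j. {(0, j)}) ` {..<w}" by auto
  moreover have "inj_on (\<lambda>j. {(0::nat, j)}) {..<w}" by (auto simp: inj_on_def)
  ultimately show ?case by (simp add: card_image)
next
  case (Suc d)
  have "card (fht w (Suc d)) = card (fht w d \<times> {0, 1::nat})"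
    unfolding fht_Suc_image by (rule card_image[OF inj_step[OF assms(1)]])
  also have "\<dots> = card (fht w d) * 2" by (simp add: card_cartesian_product)
  finally show ?case using Suc.IH by simp
qed

end
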